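(* Let $(S,K,I)$ be a split graph such that $K=\bigcup_{v\in I}N_v$. Let $P=v_1\ldots v_n$, with $n\geq 2$, be an induced path in $\Phi(S)$ with $d_1=\max\{d_i: i\in[n]\}$. Then: (1) $\left|\bigcup_{i=1}^n N_i\right|-d_1$ divides $\sigma_{12}$; (2) if $\Phi(S)=P$, then $|K|-d_1$ divides $\sigma_{12}$.
   Context: A split graph $(S,K,I)$ is a graph $S$ together with a fixed partition $V(S)=K\dot\cup I$, where $K$ is a clique and $I$ is an independent set. For a vertex $v_i$ (or $v$) of $S$, $N_i$ (or $N_v$) denotes its open neighborhood in $S$ and $d_i=|N_i|$ its degree in $S$; for $u,v$ write $\eta_{uv}=|N_u\cap N_v|$. The factor graph $\Phi(S)$ is the loopless multigraph with vertex set $I$ in which, for distinct $u,v\in I$, there is one edge joining $u$ and $v$ for each 2-switch of $S$ acting on $u$ and $v$ (a 2-switch replaces edges $ab,cd$ with $ac,bd$ when $ab,cd\in E(S)$ and $ac,bd\notin E(S)$); equivalently, the multiplicity of the edge $uv$ is $\sigma_{uv}=(d_u-\eta_{uv})(d_v-\eta_{uv})$, and $u,v$ are adjacent iff $\sigma_{uv}>0$. $\sigma_{12}$ denotes $\sigma_{v_1v_2}$. An induced path in $\Phi(S)$ consists of distinct vertices with consecutive ones adjacent and no other pair adjacent (multiplicities ignored for adjacency). *)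

theory Defs
  imports Main
begin

definition split_graph :: "'a set \<Rightarrow> ('a \<Rightarrow> 'a \<Rightarrow> bool) \<Rightarrow> 'a set \<Rightarrow> 'a set \<Rightarrow> bool" where
  "split_graph V E K I \<longleftrightarrow>
     finite V \<and>
     (\<forall>u v. E u v \<longrightarrow> u \<in> V \<and> v \<in> V) \<and>
     (\<forall>u v. E u v \<longrightarrow> E v u) \<and>
     (\<forall>v. \<not> E v v) \<and>
     K \<union> I = V \<and> K \<inter> I = {} \<and>
     (\<forall>u\<in>K. \<forall>v\<in>K. u \<noteq> v \<longrightarrow> E u v) \<and>
     (\<forall>u\<in>I. \<forall>v\<in>I. \<not> E u v)"

definition nbhd :: "'a set \<Rightarrow> ('a \<Rightarrow> 'a \<Rightarrow> bool) \<Rightarrow> 'a \<Rightarrow> 'a set" where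
  "nbhd V E v = {u \<in> V. E v u}"

definition deg :: "'a set \<Rightarrow> ('a \<Rightarrow> 'a \<Rightarrow> bool) \<Rightarrow> 'a \<Rightarrow> nat" where
  "deg V E v = card (nbhd V E v)"

definition eta :: "'a set \<Rightarrow> ('a \<Rightarrow> 'a \<Rightarrow> bool) \<Rightarrow> 'a \<Rightarrow> 'a \<Rightarrow> nat" where
  "eta V E u v = card (nbhd V E u \<inter> nbhd V E v)"

text \<open>Multiplicity of the edge uv in the factor graph \<Phi>(S).\<close>
definition sigma :: "'a set \<Rightarrow> ('a \<Rightarrow> 'a \<Rightarrow> bool) \<Rightarrow> 'a \<Rightarrow> 'a \<Rightarrow> nat" where
  "sigma V E u v = (deg V E u - eta V E u v) * (deg V E v - eta V E u v)"

definition phi_adj :: "'a set \<Rightarrow> ('a \<Rightarrow> 'a \<Rightarrow> bool) \<Rightarrow> 'a set \<Rightarrow> 'a \<Rightarrow> 'a \<Rightarrow> bool" where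
  "phi_adj V E I u v \<longleftrightarrow> u \<in> I \<and> v \<in> I \<and> u \<noteq> v \<and> sigma V E u v > 0"

text \<open>Induced path v_1 ... v_n in \<Phi>(S), given as the list [v_1,...,v_n]
  (so v_i = vs ! (i-1)).\<close>
definition phi_induced_path :: "'a set \<Rightarrow> ('a \<Rightarrow> 'a \<Rightarrow> bool) \<Rightarrow> 'a set \<Rightarrow> 'a list \<Rightarrow> bool" where
  "phi_induced_path V E I vs \<longleftrightarrow>
     distinct vs \<and> set vs \<subseteq> I \<and>
     (\<forall>i j. i < length vs \<longrightarrow> j < length vs \<longrightarrow>
        (phi_adj V E I (vs ! i) (vs ! j) \<longleftrightarrow> (j = Suc i \<or> i = Suc j)))"

definition phi_is_path :: "'a set \<Rightarrow> ('a \<Rightarrow> 'a \<Rightarrow> bool) \<Rightarrow> 'a set \<Rightarrow> 'a list \<Rightarrow> bool" where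
  "phi_is_path V E I vs \<longleftrightarrow>
     I = set vs \<and>
     (\<forall>u\<in>I. \<forall>w\<in>I. phi_adj V E I u w \<longleftrightarrow>
        (\<exists>i. Suc i < length vs \<and> ((u = vs ! i \<and> w = vs ! Suc i) \<or> (w = vs ! i \<and> u = vs ! Suc i))))"

end

theory Submission
  imports Defs
begin

lemma nb_fin: "finite V \<Longrightarrow> finite (nbhd V E v)"
  unfolding nbhd_def by simp

lemma key:
  fixes V :: "'a set" and E :: "'a \<Rightarrow> 'a \<Rightarrow> bool" and K I :: "'a set" and vs :: "'a list"
  assumes split: "split_graph V E K I"
    and path: "phi_induced_path V E I vs"
    and len: "length vs \<ge> 2"
    and dmax: "\<forall>i < length vs. deg V E (vs ! i) \<le> deg V E (vs ! 0)"
  shows "(int (card (\<Union>i<length vs. nbhd V E (vs ! i))) - int (deg V E (vs ! 0)))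
            dvd int (sigma V E (vs ! 0) (vs ! 1))"
proof -
  have finV: "finite V" using split unfolding split_graph_def by auto
  have l0: "0 < length vs" "1 < length vs" using len by linarith+
  define N where "N = (\<lambda>i. nbhd V E (vs ! i))"
  have fin: "\<And>i. finite (N i)" unfolding N_def using nb_fin[OF finV] by auto
  have sub: "N i \<subseteq> N 0" if i: "i < length vs" "i \<ge> 2" for i
  proof -
    have ne: "vs ! 0 \<noteq> vs ! i"
    proof
      assume h: "vs ! 0 = vs ! i"
      have "distinct vs" using path unfolding phi_induced_path_def by auto
      moreover have "0 < length vs" using i(1) by linarith
      ultimately have "0 = i" using nth_eq_iff_index_eq[of vs 0 i] i h by blast
      thus False using i by simp
    qed
    have inI: "vs ! 0 \<in> I" "vs ! i \<in> I" using path i l0 nth_mem[OF l0(1)] nth_mem[OF i(1)]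
      unfolding phi_induced_path_def by blast+
    have "\<not> phi_adj V E I (vs ! 0) (vs ! i)" using path i l0 unfolding phi_induced_path_def
      by auto
    hence "sigma V E (vs ! 0) (vs ! i) = 0" using ne inI unfolding phi_adj_def by auto
    hence "card (N 0) - card (N 0 \<inter> N i) = 0 \<or> card (N i) - card (N 0 \<inter> N i) = 0"
      unfolding sigma_def deg_def eta_def N_def by auto
    moreover have "card (N 0 \<inter> N i) \<le> card (N 0)" "card (N 0 \<inter> N i) \<le> card (N i)"
      using fin by (auto intro: card_mono)
    ultimately have "card (N 0 \<inter> N i) = card (N 0) \<or> card (N 0 \<inter> N i) = card (N i)" by auto
    hence "N 0 \<subseteq> N i \<or> N i \<subseteq> N 0"
      using fin by (metis Int_lower1 Int_lower2 card_subset_eq)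
    moreover have "card (N i) \<le> card (N 0)" using dmax i unfolding N_def deg_def by auto
    ultimately show ?thesis using fin by (metis card_seteq order_refl)
  qed
  have U: "(\<Union>i<length vs. N i) = N 0 \<union> N 1"
  proof
    show "(\<Union>i<length vs. N i) \<subseteq> N 0 \<union> N 1"
    proof
      fix x assume "x \<in> (\<Union>i<length vs. N i)"
      then obtain i where "i < length vs" "x \<in> N i" by auto
      then show "x \<in> N 0 \<union> N 1" using sub[of i]
        by (cases "i = 0"; cases "i = 1"; auto)
    qed
    show "N 0 \<union> N 1 \<subseteq> (\<Union>i<length vs. N i)" using len by force
  qed
  have c1: "card (N 0 \<union> N 1) = card (N 0) + card (N 1 - N 0)"
    using fin by (metis Un_Diff_cancel card_Un_disjoint Diff_disjoint finite_Diff)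
  have c2: "card (N 1) - card (N 0 \<inter> N 1) = card (N 1 - N 0)"
    using fin by (metis Int_commute card_Diff_subset_Int Diff_Int2 Int_absorb inf_le1 finite_Int
         card_Diff_subset Diff_Int_distrib2)
  have "sigma V E (vs ! 0) (vs ! 1) = (card (N 0) - card (N 0 \<inter> N 1)) * card (N 1 - N 0)"
    using c2 unfolding sigma_def deg_def eta_def N_def by simp
  moreover have "int (card (\<Union>i<length vs. N i)) - int (card (N 0)) = int (card (N 1 - N 0))"
    using U c1 by simp
  ultimately show ?thesis unfolding N_def deg_def by simp
qed

theorem corollary2p5:
  fixes V :: "'a set" and E :: "'a \<Rightarrow> 'a \<Rightarrow> bool" and K I :: "'a set" and vs :: "'a list"
  assumes split: "split_graph V E K I"
    and cover: "K = (\<Union>v\<in>I. nbhd V E v)"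
    and path: "phi_induced_path V E I vs"
    and len: "length vs \<ge> 2"
    and dmax: "\<forall>i < length vs. deg V E (vs ! i) \<le> deg V E (vs ! 0)"
  shows "(int (card (\<Union>i<length vs. nbhd V E (vs ! i))) - int (deg V E (vs ! 0)))
            dvd int (sigma V E (vs ! 0) (vs ! 1)) \<and>
         (phi_is_path V E I vs \<longrightarrow>
          (int (card K) - int (deg V E (vs ! 0))) dvd int (sigma V E (vs ! 0) (vs ! 1)))"
proof -
  have k: ?thesis if "phi_is_path V E I vs" 
  proof -
    have "I = set vs" using that unfolding phi_is_path_def by auto
    hence "K = (\<Union>i<length vs. nbhd V E (vs ! i))" using cover
      by (auto simp: in_set_conv_nth) (metis nth_mem)
    thus ?thesis using key[OF split path len dmax] by simp
  qed
  show ?thesis using key[OF split path len dmax] k by blast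
qed

end
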